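(* Let $r>1$ and let $n$ be a positive integer. Then $$C_{r^n}(1)\le \frac1n\cdot\frac{r}{r-1}.$$
   Context: For $s>1$, $\mathcal A_s=\{w\in\mathbb C: 1/s<|w|<s\}$. $C_s(1)$ denotes Carathéodory's infinitesimal metric of $\mathcal A_s$ at the point $1$ evaluated on the tangent vector $1$ (identifying tangent spaces with $\mathbb C$), i.e. $C_s(1)=\sup\{|g'(1)|: g:\mathcal A_s\to\Delta \text{ holomorphic},\ g(1)=0\}$, $\Delta$ the unit disc. *)

theory Defs
  imports "HOL-Complex_Analysis.Complex_Analysis"
begin

definition annulus :: "real \<Rightarrow> complex set" where
  "annulus s = {w. 1 / s < norm w \<and> norm w < s}"

text \<open>Caratheodory infinitesimal metric of the annulus at the point 1 on the tangent vector 1: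
  supremum of |g'(1)| over holomorphic g from the annulus into the open unit disc with g(1) = 0.\<close>
definition cara_annulus :: "real \<Rightarrow> real" where
  "cara_annulus s = Sup {norm (deriv g 1) | g.
      g holomorphic_on annulus s \<and> g ` annulus s \<subseteq> ball 0 1 \<and> g 1 = 0}"

end

theory Submission
  imports Defs
begin

lemma open_annulus: "open (annulus s)"
  unfolding annulus_def
  by (intro open_Collect_conj open_Collect_less continuous_intros)

lemma mem_annulus:
  fixes r :: real and n :: nat and z :: complex
  assumes r: "r > 1" and n: "n > 0" and z: "norm z < 1"
  shows "(1 + complex_of_real ((r-1)/r) * z) ^ n \<in> annulus (r ^ n)"
proof -
  define \<rho> where "\<rho> = (r-1)/r"
  have rho0: "0 < \<rho>" using r by (simp add: \<rho>_def)
  have rho1: "1 - \<rho> = 1/r" using r by (simp add: \<rho>_def field_simps)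
  have rho2: "1 + \<rho> \<le> r"
  proof -
    have "(r-1)^2 \<ge> 0" by simp
    then have "r + (r - 1) \<le> r*r" by (simp add: power2_eq_square algebra_simps)
    then show ?thesis using r by (simp add: \<rho>_def field_simps)
  qed
  have nz: "norm (complex_of_real \<rho> * z) < \<rho>"
    using rho0 z by (simp add: norm_mult)
  have lo: "1/r < norm (1 + complex_of_real \<rho> * z)"
  proof -
    have "1 - norm (complex_of_real \<rho> * z) \<le> norm (1 + complex_of_real \<rho> * z)"
      using norm_triangle_ineq2[of 1 "- (complex_of_real \<rho> * z)"] by simp
    then show ?thesis using nz rho1 by linarith
  qed
  have hi: "norm (1 + complex_of_real \<rho> * z) < r"
  proof -
    have "norm (1 + complex_of_real \<rho> * z) \<le> 1 + norm (complex_of_real \<rho> * z)"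
      using norm_triangle_ineq[of 1 "complex_of_real \<rho> * z"] by simp
    then show ?thesis using nz rho2 by linarith
  qed
  have p1: "(1/r)^n < norm (1 + complex_of_real \<rho> * z) ^ n"
    using lo n r by (intro power_strict_mono) auto
  have p2: "norm (1 + complex_of_real \<rho> * z) ^ n < r ^ n"
    using hi n by (intro power_strict_mono) auto
  show ?thesis using p1 p2
    by (simp add: annulus_def norm_power power_divide \<rho>_def)
qed

theorem lemma3:
  fixes r :: real and n :: nat
  assumes "r > 1" and "n > 0"
  shows "cara_annulus (r ^ n) \<le> (1 / real n) * (r / (r - 1))"
  unfolding cara_annulus_def
proof (rule cSup_least)
  show "{norm (deriv g 1) | g. g holomorphic_on annulus (r ^ n) \<and> g ` annulus (r ^ n) \<subseteq> ball 0 1 \<and> g 1 = 0} \<noteq> {}"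
    by (rule ccontr) (auto simp: holomorphic_on_const dest: spec[of _ "\<lambda>_. 0"])
next
  fix x assume "x \<in> {norm (deriv g 1) | g. g holomorphic_on annulus (r ^ n) \<and> g ` annulus (r ^ n) \<subseteq> ball 0 1 \<and> g 1 = 0}"
  then obtain g where x: "x = norm (deriv g 1)" and hol: "g holomorphic_on annulus (r ^ n)"
    and im: "g ` annulus (r ^ n) \<subseteq> ball 0 1" and g1: "g 1 = 0" by blast
  define \<rho> where "\<rho> = (r-1)/r"
  have rho0: "0 < \<rho>" using assms by (simp add: \<rho>_def)
  define p where "p = (\<lambda>z::complex. (1 + complex_of_real \<rho> * z) ^ n)"
  define f where "f = g \<circ> p"
  have pin: "p z \<in> annulus (r ^ n)" if "norm z < 1" for z
    using mem_annulus[OF assms that] by (simp add: p_def \<rho>_def)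
  have p0: "p 0 = 1" by (simp add: p_def)
  have holp: "p holomorphic_on ball 0 1" unfolding p_def by (intro holomorphic_intros)
  have holf: "f holomorphic_on ball 0 1" unfolding f_def
    by (rule holomorphic_on_compose_gen[OF holp hol]) (auto simp: pin)
  have f0: "f 0 = 0" by (simp add: f_def p0 g1)
  have fno: "norm (f z) < 1" if "norm z < 1" for z
    using im pin[OF that] by (auto simp: f_def)
  have sch: "norm (deriv f 0) \<le> 1"
    using Schwarz_Lemma(2)[OF holf f0 fno, of 0] by auto
  have "1 \<in> annulus (r ^ n)" using pin[of 0] p0 by simp
  then have dg: "(g has_field_derivative deriv g 1) (at 1)"
    using hol open_annulus holomorphic_derivI by blast
  have dp: "(p has_field_derivative (of_nat n * complex_of_real \<rho>)) (at 0)"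
    unfolding p_def by (auto intro!: derivative_eq_intros)
  have "(f has_field_derivative deriv g 1 * (of_nat n * complex_of_real \<rho>)) (at 0)"
    unfolding f_def using DERIV_chain[OF _ dp, of g "deriv g 1"] dg p0 by simp
  then have "deriv f 0 = deriv g 1 * (of_nat n * complex_of_real \<rho>)"
    by (rule DERIV_imp_deriv)
  with sch have "norm (deriv g 1) * (real n * \<rho>) \<le> 1"
    using rho0 by (simp add: norm_mult)
  then have "norm (deriv g 1) \<le> 1 / (real n * \<rho>)"
    using rho0 assms by (simp add: field_simps)
  also have "\<dots> = (1 / real n) * (r / (r - 1))"
    using assms by (simp add: \<rho>_def)
  finally show "x \<le> (1 / real n) * (r / (r - 1))" using x by simp
qed

end
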